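(* For every $\delta\in(0,1/6)$, $\mathbb P$-a.s. for all $N$ large enough there exist radii $(\rho_x)_{x\in\mathbb H_N}$ with $1\le\rho_x\le N^{3\delta}$ such that for all $x\in\mathbb H_N$ and all $y\in\partial B(x,\rho_x)$ one has $\tau_y\le 2^{\frac12N^{1-\delta}}$.
   Context: $\mathbb H_N=\{-1,1\}^N$ with Hamming distance $d$; $B(x,r)=\{y:d(x,y)\le r\}$, $\partial B(x,r)=\{y:d(x,y)=r\}$. $(E_x)_{x\in\mathbb H_N,N\ge1}$ i.i.d. standard Gaussians on $(\Omega,\mathcal F,\mathbb P)$; $\beta>0$; $\tau_x=e^{\beta\sqrt NE_x}$. "$\mathbb P$-a.s. for $N$ large enough" means: for $\mathbb P$-a.e. realization there is $N_0$ such that the statement holds for all $N\ge N_0$. *)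

theory Defs
  imports "HOL-Probability.Probability"
begin

definition hcube :: "nat \<Rightarrow> int list set" where
  "hcube N = {x. length x = N \<and> set x \<subseteq> {-1, 1}}"

definition hdist :: "int list \<Rightarrow> int list \<Rightarrow> nat" where
  "hdist x y = card {i. i < length x \<and> x ! i \<noteq> y ! i}"

definition hsphere :: "nat \<Rightarrow> int list \<Rightarrow> nat \<Rightarrow> int list set" where
  "hsphere N x r = {y \<in> hcube N. hdist x y = r}"

definition gidx :: "(nat \<times> int list) set" where
  "gidx = {(N, x). N \<ge> 1 \<and> x \<in> hcube N}"

end

theory Submission imports Defs "HOL-Real_Asymp.Real_Asymp" begin

lemma normal_pointwise:
  fixes t x :: real assumes "0 \<le> t" "t < x"
  shows "std_normal_density x \<le> exp (-(t^2)/4) * sqrt 2 * normal_density 0 (sqrt 2) x"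
proof -
  have "t^2 \<le> x^2" using assms by (simp add: power_mono)
  have e: "exp (- x\<^sup>2 / 2) \<le> exp (-(t^2)/4) * exp (-(x^2)/4)"
    unfolding exp_add[symmetric] using \<open>t^2 \<le> x^2\<close> by simp
  have "normal_density 0 (sqrt 2) x = 1 / (sqrt 2 * sqrt (2*pi)) * exp (-(x^2)/4)"
    by (simp add: normal_density_def real_sqrt_mult)
  then have "exp (-(t^2)/4) * sqrt 2 * normal_density 0 (sqrt 2) x = (1 / sqrt (2*pi)) * (exp (-(t^2)/4) * exp (-(x^2)/4))"
    by (simp add: field_simps)
  moreover have "std_normal_density x = (1 / sqrt (2*pi)) * exp (- x\<^sup>2 / 2)"
    by (simp add: std_normal_density_def)
  ultimately show ?thesis using e by (simp add: divide_right_mono)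
qed

lemma std_normal_tail:
  assumes P: "prob_space M" and D: "distributed M lborel X std_normal_density" and t: "0 \<le> t"
  shows "measure M {\<omega>\<in>space M. t < X \<omega>} \<le> 2 * exp (-(t^2)/4)"
proof -
  interpret prob_space M by fact
  have Xm: "X \<in> borel_measurable M" using distributed_measurable[OF D] by simp
  let ?g = "\<lambda>x. exp (-(t^2)/4) * sqrt 2 * normal_density 0 (sqrt 2) x"
  have "emeasure M {\<omega>\<in>space M. t < X \<omega>} = emeasure (distr M lborel X) {t<..}"
    using distributed_measurable[OF D]
    by (subst emeasure_distr) (auto intro!: arg_cong2[where f=emeasure])
  also have "\<dots> = emeasure (density lborel std_normal_density) {t<..}"
    unfolding distributed_distr_eq_density[OF D] ..
  also have "\<dots> = (\<integral>\<^sup>+x. ennreal (std_normal_density x) * indicator {t<..} x \<partial>lborel)"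
    by (subst emeasure_density) auto
  also have "\<dots> \<le> (\<integral>\<^sup>+x. ennreal (?g x) \<partial>lborel)"
    by (intro nn_integral_mono) (auto simp: indicator_def intro!: ennreal_leI dest: normal_pointwise[OF t])
  also have "\<dots> = ennreal (\<integral>x. ?g x \<partial>lborel)"
    by (intro nn_integral_eq_integral) auto
  also have "\<dots> = ennreal (exp (-(t^2)/4) * sqrt 2)"
    by simp
  finally have "measure M {\<omega>\<in>space M. t < X \<omega>} \<le> exp (-(t^2)/4) * sqrt 2"
    by (simp add: emeasure_eq_measure)
  also have "\<dots> \<le> exp (-(t^2)/4) * 2"
    by (intro mult_left_mono) (auto simp: real_sqrt_le_iff[of 2 4, simplified])
  finally show ?thesis by simp
qed

lemma hcube_eq: "hcube N = {xs. set xs \<subseteq> {-1,1} \<and> length xs = N}"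
  unfolding hcube_def by auto

lemma finite_hcube: "finite (hcube N)"
  unfolding hcube_eq by (rule finite_lists_length_eq) simp

lemma card_hcube: "card (hcube N) = 2^N"
  unfolding hcube_eq by (subst card_lists_length_eq) (simp_all add: numeral_2_eq_2)

lemma finite_hsphere: "finite (hsphere N x r)"
  unfolding hsphere_def using finite_hcube by simp

lemma hsphere_card:
  assumes x: "x \<in> hcube N"
  shows "card (hsphere N x r) \<le> N ^ r"
proof -
  define f where "f y = {i. i < N \<and> x ! i \<noteq> y ! i}" for y :: "int list"
  have inj: "inj_on f (hsphere N x r)"
  proof (rule inj_onI)
    fix y z assume y: "y \<in> hsphere N x r" and z: "z \<in> hsphere N x r" and fyz: "f y = f z"
    have ly: "length y = N" and lz: "length z = N" and lx: "length x = N"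
      using x y z by (auto simp: hsphere_def hcube_def)
    show "y = z"
    proof (rule nth_equalityI)
      show "length y = length z" using ly lz by simp
      fix i assume "i < length y"
      then have i: "i < N" using ly by simp
      have "y ! i \<in> set y" "z ! i \<in> set z" "x ! i \<in> set x"
        using i ly lz lx by auto
      then have "y ! i \<in> {-1,1}" "z ! i \<in> {-1,1}" "x ! i \<in> {-1,1}"
        using y z x by (auto simp: hsphere_def hcube_def)
      moreover have "(x ! i \<noteq> y ! i) = (x ! i \<noteq> z ! i)"
        using fyz i unfolding f_def by blast
      ultimately show "y ! i = z ! i" by auto
    qed
  qed
  have img: "f ` hsphere N x r \<subseteq> {B. B \<subseteq> {..<N} \<and> card B = r}"
    using x by (auto simp: f_def hsphere_def hdist_def hcube_def)
  have "card (hsphere N x r) = card (f ` hsphere N x r)"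
    using inj by (simp add: card_image)
  also have "\<dots> \<le> card {B. B \<subseteq> {..<N} \<and> card B = r}"
    by (intro card_mono img) simp
  also have "\<dots> = N choose r"
    by (subst n_subsets) simp_all
  also have "\<dots> \<le> N ^ r"
    by (cases "r \<le> N") (auto intro: binomial_le_pow simp: binomial_eq_0 not_le)
  finally show ?thesis .
qed

lemma ball_bound:
  fixes M :: "'a measure" and E :: "nat \<Rightarrow> int list \<Rightarrow> 'a \<Rightarrow> real"
  assumes P: "prob_space M"
    and I: "prob_space.indep_vars M (\<lambda>_. borel) (\<lambda>(N, x). E N x) gidx"
    and D: "\<And>N x. (N, x) \<in> gidx \<Longrightarrow> distributed M lborel (E N x) std_normal_density"
    and N: "1 \<le> N" and x: "x \<in> hcube N" and k: "1 \<le> k" and t: "0 \<le> t"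
  shows "measure M {\<omega>\<in>space M. \<forall>r\<in>{1..k}. \<exists>y\<in>hsphere N x r. t < E N y \<omega>}
           \<le> real N ^ (k*k) * (2 * exp (-(t^2)/4))^k"
proof -
  interpret prob_space M by fact
  define S where "S r = hsphere N x r" for r
  define C where "C = PiE {1..k} S"
  define p where "p = 2 * exp (-(t^2)/4)"
  define B where "B c = (\<Inter>r\<in>{1..k}. {\<omega>\<in>space M. t < E N (c r) \<omega>})" for c :: "nat \<Rightarrow> int list"
  have meas1: "{\<omega>\<in>space M. t < E N y \<omega>} \<in> events" if "y \<in> hcube N" for y
  proof -
    have "(N, y) \<in> gidx" using that N by (simp add: gidx_def)
    then have "E N y \<in> borel_measurable M" using distributed_measurable[OF D] by simp
    then show ?thesis by measurable
  qed
  have Sh: "S r \<subseteq> hcube N" for r by (auto simp: S_def hsphere_def)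
  have finC: "finite C" unfolding C_def S_def by (intro finite_PiE finite_hsphere) simp
  have measB: "B c \<in> events" if "c \<in> C" for c
  proof -
    have "c r \<in> hcube N" if "r \<in> {1..k}" for r
      using Sh[of r] \<open>c \<in> C\<close> that by (auto simp: C_def PiE_iff)
    then show ?thesis unfolding B_def using k by (intro sets.finite_INT meas1) auto
  qed
  have sub: "{\<omega>\<in>space M. \<forall>r\<in>{1..k}. \<exists>y\<in>hsphere N x r. t < E N y \<omega>} \<subseteq> (\<Union>c\<in>C. B c)"
  proof
    fix \<omega> assume w: "\<omega> \<in> {\<omega>\<in>space M. \<forall>r\<in>{1..k}. \<exists>y\<in>hsphere N x r. t < E N y \<omega>}"
    define c where "c = (\<lambda>r\<in>{1..k}. SOME y. y \<in> S r \<and> t < E N y \<omega>)"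
    have "c r \<in> S r \<and> t < E N (c r) \<omega>" if "r \<in> {1..k}" for r
    proof -
      have "\<exists>y. y \<in> S r \<and> t < E N y \<omega>" using w that by (auto simp: S_def)
      then have "(SOME y. y \<in> S r \<and> t < E N y \<omega>) \<in> S r \<and> t < E N (SOME y. y \<in> S r \<and> t < E N y \<omega>) \<omega>"
        by (rule someI_ex)
      then show ?thesis unfolding c_def using that by simp
    qed
    then have "c \<in> C" "\<omega> \<in> B c" using w by (auto simp: C_def B_def c_def)
    then show "\<omega> \<in> (\<Union>c\<in>C. B c)" by blast
  qed
  have Bc: "prob (B c) \<le> p ^ k" if c: "c \<in> C" for c
  proof -
    let ?X = "\<lambda>(N, x). E N x"
    define J where "J = (\<lambda>r. (N, c r)) ` {1..k}"
    have cS: "c r \<in> S r" if "r \<in> {1..k}" for r using c that by (auto simp: C_def)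
    have cH: "c r \<in> hcube N" if "r \<in> {1..k}" for r using Sh[of r] cS[OF that] by blast
    have inj: "inj_on (\<lambda>r. (N, c r)) {1..k}"
    proof (rule inj_onI)
      fix r r' assume "r \<in> {1..k}" "r' \<in> {1..k}" "(N, c r) = (N, c r')"
      then show "r = r'" using cS[of r] cS[of r'] by (auto simp: S_def hsphere_def)
    qed
    have Jg: "J \<subseteq> gidx" using cH N by (auto simp: J_def gidx_def)
    have "prob (\<Inter>i\<in>J. ?X i -` {t<..} \<inter> space M) = (\<Prod>i\<in>J. prob (?X i -` {t<..} \<inter> space M))"
      by (rule indep_varsD[OF I]) (use k Jg in \<open>auto simp: J_def\<close>)
    moreover have "(\<Inter>i\<in>J. ?X i -` {t<..} \<inter> space M) = B c"
      using k by (auto simp: J_def B_def)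
    moreover have "(\<Prod>i\<in>J. prob (?X i -` {t<..} \<inter> space M)) = (\<Prod>r\<in>{1..k}. prob {\<omega>\<in>space M. t < E N (c r) \<omega>})"
      unfolding J_def by (subst prod.reindex[OF inj]) (auto intro!: prod.cong arg_cong[where f=prob])
    moreover have "(\<Prod>r\<in>{1..k}. prob {\<omega>\<in>space M. t < E N (c r) \<omega>}) \<le> (\<Prod>r\<in>{1..k}. p)"
    proof (intro prod_mono conjI)
      fix r assume r: "r \<in> {1..k}"
      have "(N, c r) \<in> gidx" using cH[OF r] N by (auto simp: gidx_def)
      then show "prob {\<omega>\<in>space M. t < E N (c r) \<omega>} \<le> p"
        unfolding p_def by (intro std_normal_tail[OF P D t])
    qed simp
    ultimately show ?thesis by simp
  qed
  have "measure M {\<omega>\<in>space M. \<forall>r\<in>{1..k}. \<exists>y\<in>hsphere N x r. t < E N y \<omega>} \<le> prob (\<Union>c\<in>C. B c)"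
    using sub measB finC by (intro finite_measure_mono) auto
  also have "\<dots> \<le> (\<Sum>c\<in>C. prob (B c))"
    using measB finC by (intro measure_UNION_le) auto
  also have "\<dots> \<le> (\<Sum>c\<in>C. p ^ k)"
    by (intro sum_mono Bc)
  also have "\<dots> = real (card C) * p ^ k" by simp
  also have "\<dots> \<le> real N ^ (k*k) * p ^ k"
  proof (intro mult_right_mono)
    have "card C = (\<Prod>r\<in>{1..k}. card (S r))" unfolding C_def by (simp add: card_PiE)
    also have "\<dots> \<le> (\<Prod>r\<in>{1..k}. N ^ k)"
    proof (intro prod_mono conjI)
      fix r assume r: "r \<in> {1..k}"
      have "card (S r) \<le> N ^ r" unfolding S_def by (rule hsphere_card[OF x])
      also have "\<dots> \<le> N ^ k" using r N by (intro power_increasing) auto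
      finally show "card (S r) \<le> N ^ k" .
    qed simp
    also have "\<dots> = N ^ (k*k)" by (simp add: power_mult)
    finally show "real (card C) \<le> real N ^ (k*k)" by (metis of_nat_le_iff of_nat_power)
  qed (simp add: p_def)
  finally show ?thesis by (simp add: p_def)
qed

lemma lim1: fixes e :: real assumes "e < 0" shows "((\<lambda>x::real. x powr e * ln x) \<longlongrightarrow> 0) at_top"
  using assms by real_asymp
lemma lim2: fixes e :: real assumes "e < 0" shows "((\<lambda>x::real. x powr e) \<longlongrightarrow> 0) at_top"
  using assms by real_asymp

lemma key_asym:
  fixes d c :: real assumes d: "0 < d" "d < 1/6" and c: "c > 0"
  shows "\<exists>N1. \<forall>N\<ge>N1. real N * ln 2 + real N powr (6*d) * ln (real N) + real N powr (3*d) * ln 2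
           + 2 * ln (real N) \<le> c * real N powr (1+d)"
proof -
  let ?h = "\<lambda>x::real. x powr (-d) * ln 2 + x powr (5*d-1) * ln x + x powr (2*d-1) * ln 2 + 2 * (x powr (-1-d) * ln x)"
  have "(?h \<longlongrightarrow> 0 * ln 2 + 0 + 0 * ln 2 + 2 * 0) at_top"
    using d by (intro tendsto_intros lim1 lim2) auto
  then have "eventually (\<lambda>x. ?h x < c) at_top"
    using c by (intro order_tendstoD) auto
  then obtain X where X: "\<And>x. x \<ge> X \<Longrightarrow> ?h x < c"
    by (auto simp: eventually_at_top_linorder)
  show ?thesis
  proof (intro exI allI impI)
    fix N :: nat assume N: "N \<ge> max 1 (nat \<lceil>X\<rceil>)"
    define x where "x = real N"
    have x0: "x > 0" using N by (simp add: x_def)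
    have "X \<le> real (nat \<lceil>X\<rceil>)" by (rule real_nat_ceiling_ge)
    also have "\<dots> \<le> x" unfolding x_def using N by simp
    finally have "?h x < c" by (intro X)
    then have "x powr (1+d) * ?h x \<le> x powr (1+d) * c"
      using x0 by (intro mult_left_mono) auto
    moreover have "x powr (1+d) * ?h x = x * ln 2 + x powr (6*d) * ln x + x powr (3*d) * ln 2 + 2 * ln x"
      using x0 by (simp add: algebra_simps flip: powr_add)
    ultimately show "real N * ln 2 + real N powr (6*d) * ln (real N) + real N powr (3*d) * ln 2
           + 2 * ln (real N) \<le> c * real N powr (1+d)"
      by (simp add: x_def mult.commute)
  qed
qed

lemma bound_le:
  fixes d a :: real and N N1 :: nat
  assumes d: "0 < d" "d < 1/6" and a: "a > 0" and N: "1 \<le> N"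
    and N1: "\<forall>N\<ge>N1. real N * ln 2 + real N powr (6*d) * ln (real N) + real N powr (3*d) * ln 2
           + 2 * ln (real N) \<le> (a^2/8) * real N powr (1+d)"
    and NN1: "N \<ge> N1"
  shows "2^N * real N ^ (nat \<lfloor>real N powr (3*d)\<rfloor> * nat \<lfloor>real N powr (3*d)\<rfloor>)
          * (2 * exp (-((a * real N powr (1/2 - d))^2)/4)) ^ (nat \<lfloor>real N powr (3*d)\<rfloor>)
         \<le> inverse (real N ^ 2)"
proof -
  define K where "K = real N powr (3*d)"
  define k where "k = nat \<lfloor>K\<rfloor>"
  define t where "t = a * real N powr (1/2 - d)"
  define L where "L = ln (real N)"
  have Npos: "real N > 0" using N by simp
  have L0: "L \<ge> 0" using N by (simp add: L_def)
  have K1: "K \<ge> 1" unfolding K_def using N d by (intro ge_one_powr_ge_zero) auto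
  have kK: "real k \<le> K" unfolding k_def using K1 by simp
  have kK2: "real k \<ge> K/2"
  proof -
    have "real_of_int \<lfloor>K\<rfloor> > K - 1" by linarith
    moreover have "real_of_int \<lfloor>K\<rfloor> \<ge> 1" using K1 by simp
    ultimately have "real_of_int \<lfloor>K\<rfloor> \<ge> K/2" by linarith
    then show ?thesis unfolding k_def using K1 by simp
  qed
  have KK: "K * K = real N powr (6*d)" unfolding K_def by (simp flip: powr_add)
  have t2: "t^2 = a^2 * real N powr (1 - 2*d)"
    unfolding t_def by (simp add: power_mult_distrib power2_eq_square flip: powr_add)
  have Kt: "K * real N powr (1 - 2*d) = real N powr (1+d)"
    unfolding K_def by (simp add: add.commute flip: powr_add)
  define Ex where "Ex = real N * ln 2 + real k * real k * L + real k * ln 2 - real k * t^2 / 4"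
  have lhs: "2^N * real N ^ (k*k) * (2 * exp (-(t^2)/4)) ^ k = exp Ex"
  proof -
    have "exp Ex = exp (real N * ln 2) * exp (real (k*k) * L) * exp (real k * ln 2) * exp (real k * (-(t^2)/4))"
    proof -
      have "Ex = real N * ln 2 + real (k*k) * L + real k * ln 2 + real k * (-(t^2)/4)"
        unfolding Ex_def by simp
      then show ?thesis by (simp only: exp_add)
    qed
    also have "\<dots> = 2^N * real N ^ (k*k) * 2^k * exp (-(t^2)/4) ^ k"
    proof -
      have "exp (real (k*k) * L) = real N ^ (k*k)"
        unfolding exp_of_nat_mult L_def using Npos by simp
      moreover have "exp (real N * ln 2) = 2^N" unfolding exp_of_nat_mult by simp
      moreover have "exp (real k * ln 2) = 2^k" unfolding exp_of_nat_mult by simp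
      moreover have "exp (real k * (-(t^2)/4)) = exp (-(t^2)/4) ^ k" unfolding exp_of_nat_mult by simp
      ultimately show ?thesis by (simp only:)
    qed
    finally show ?thesis by (simp add: power_mult_distrib)
  qed
  have "real k * real k * L \<le> K * K * L"
    using kK L0 by (intro mult_right_mono mult_mono) auto
  moreover have "real k * ln 2 \<le> K * ln 2" using kK by (intro mult_right_mono) auto
  moreover have "real k * t^2 / 4 \<ge> (K/2) * t^2 / 4"
    using kK2 by (intro divide_right_mono mult_right_mono) auto
  moreover have "(K/2) * t^2 / 4 = (a^2/8) * real N powr (1+d)"
    unfolding t2 Kt[symmetric] by (simp add: field_simps)
  ultimately have "Ex \<le> real N * ln 2 + real N powr (6*d) * L + K * ln 2 - (a^2/8) * real N powr (1+d)"
    unfolding Ex_def KK[symmetric] by linarith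
  also have "\<dots> \<le> - 2 * L"
    using N1 NN1 unfolding K_def L_def by force
  finally have "exp Ex \<le> exp (-2 * L)" by simp
  also have "exp (-2 * L) = inverse (real N ^ 2)"
  proof -
    have "exp (real 2 * L) = real N ^ 2" unfolding exp_of_nat_mult L_def using Npos by simp
    then show ?thesis by (simp add: exp_minus)
  qed
  finally show ?thesis using lhs unfolding k_def K_def t_def by simp
qed

lemma good_exp:
  fixes \<beta> \<delta> e :: real and N :: nat
  assumes b: "\<beta> > 0" and N: "1 \<le> N" and e: "e \<le> ln 2 / (2*\<beta>) * real N powr (1/2 - \<delta>)"
  shows "exp (\<beta> * sqrt (real N) * e) \<le> 2 powr ((1/2) * real N powr (1 - \<delta>))"
proof -
  have Npos: "real N > 0" using N by simp
  have s: "sqrt (real N) = real N powr (1/2)" using Npos by (simp add: powr_half_sqrt)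
  have "\<beta> * sqrt (real N) * e \<le> \<beta> * sqrt (real N) * (ln 2 / (2*\<beta>) * real N powr (1/2 - \<delta>))"
    using b Npos e by (intro mult_left_mono) auto
  also have "\<dots> = (ln 2 / 2) * (real N powr (1/2) * real N powr (1/2 - \<delta>))"
    using b s by (simp add: field_simps)
  also have "real N powr (1/2) * real N powr (1/2 - \<delta>) = real N powr (1 - \<delta>)"
    by (simp flip: powr_add)
  finally have "\<beta> * sqrt (real N) * e \<le> (1/2) * real N powr (1 - \<delta>) * ln 2" by (simp add: mult.commute)
  then have "exp (\<beta> * sqrt (real N) * e) \<le> exp ((1/2) * real N powr (1 - \<delta>) * ln 2)" by simp
  also have "\<dots> = 2 powr ((1/2) * real N powr (1 - \<delta>))" by (simp add: powr_def)
  finally show ?thesis .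
qed

theorem lemma4p2:
  fixes M :: "'a measure" and E :: "nat \<Rightarrow> int list \<Rightarrow> 'a \<Rightarrow> real" and \<beta> :: real
  assumes "prob_space M"
    and "prob_space.indep_vars M (\<lambda>_. borel) (\<lambda>(N, x). E N x) gidx"
    and "\<And>N x. (N, x) \<in> gidx \<Longrightarrow> distributed M lborel (E N x) std_normal_density"
    and "\<beta> > 0"
  shows "\<forall>\<delta>::real. 0 < \<delta> \<and> \<delta> < 1/6 \<longrightarrow>
    (AE \<omega> in M. \<exists>N0. \<forall>N\<ge>N0. \<exists>\<rho> :: int list \<Rightarrow> nat.
       \<forall>x \<in> hcube N. 1 \<le> \<rho> x \<and> real (\<rho> x) \<le> real N powr (3 * \<delta>) \<and>
         (\<forall>y \<in> hsphere N x (\<rho> x).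
            exp (\<beta> * sqrt (real N) * E N y \<omega>) \<le> 2 powr ((1/2) * real N powr (1 - \<delta>))))"
proof (intro allI impI)
  fix \<delta> :: real assume \<delta>: "0 < \<delta> \<and> \<delta> < 1/6"
  interpret prob_space M by fact
  define a where "a = ln 2 / (2*\<beta>)"
  have a0: "a > 0" using assms(4) by (simp add: a_def)
  define k where "k N = nat \<lfloor>real N powr (3*\<delta>)\<rfloor>" for N :: nat
  define t where "t N = a * real N powr (1/2 - \<delta>)" for N :: nat
  define F where "F N x = {\<omega>\<in>space M. \<forall>r\<in>{1..k N}. \<exists>y\<in>hsphere N x r. t N < E N y \<omega>}" for N x
  define A where "A N = (if 1 \<le> N then (\<Union>x\<in>hcube N. F N x) else {})" for N
  have k1: "1 \<le> k N" if "1 \<le> N" for N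
  proof -
    have "real N powr (3*\<delta>) \<ge> 1" using that \<delta> by (intro ge_one_powr_ge_zero) auto
    then show ?thesis unfolding k_def by linarith
  qed
  have t0: "0 \<le> t N" for N using a0 by (simp add: t_def)
  have measE: "{\<omega>\<in>space M. t N < E N y \<omega>} \<in> events" if "1 \<le> N" "y \<in> hcube N" for N y
  proof -
    have "(N, y) \<in> gidx" using that by (simp add: gidx_def)
    then have "E N y \<in> borel_measurable M" using distributed_measurable[OF assms(3)] by simp
    then show ?thesis by measurable
  qed
  have measF: "F N x \<in> events" if N: "1 \<le> N" for N x
  proof -
    have "F N x = (\<Inter>r\<in>{1..k N}. \<Union>y\<in>hsphere N x r. {\<omega>\<in>space M. t N < E N y \<omega>})"
      using k1[OF N] by (auto simp: F_def)
    also have "\<dots> \<in> events"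
      using k1[OF N] N
      by (intro sets.finite_INT sets.finite_UN measE finite_hsphere) (auto simp: hsphere_def)
    finally show ?thesis .
  qed
  have measA: "A N \<in> events" for N
    unfolding A_def using measF finite_hcube by auto
  have probA: "prob (A N) \<le> 2^N * real N ^ (k N * k N) * (2 * exp (-((t N)^2)/4)) ^ (k N)"
    if N: "1 \<le> N" for N
  proof -
    have "prob (A N) \<le> (\<Sum>x\<in>hcube N. prob (F N x))"
      unfolding A_def using N measF finite_hcube by (simp add: measure_UNION_le)
    also have "\<dots> \<le> (\<Sum>x\<in>hcube N. real N ^ (k N * k N) * (2 * exp (-((t N)^2)/4)) ^ (k N))"
      unfolding F_def
      by (intro sum_mono ball_bound[OF assms(1-3) N _ k1[OF N] t0])
    also have "\<dots> = 2^N * real N ^ (k N * k N) * (2 * exp (-((t N)^2)/4)) ^ (k N)"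
      by (simp add: card_hcube)
    finally show ?thesis .
  qed
  obtain N1 where N1: "\<forall>N\<ge>N1. real N * ln 2 + real N powr (6*\<delta>) * ln (real N) + real N powr (3*\<delta>) * ln 2
           + 2 * ln (real N) \<le> (a^2/8) * real N powr (1+\<delta>)"
    using key_asym[of \<delta> "a^2/8"] \<delta> a0 by auto
  have summ: "summable (\<lambda>N. prob (A N))"
  proof (rule summable_comparison_test')
    show "summable (\<lambda>N. inverse (real N ^ 2))" by (rule inverse_power_summable) simp
    fix N :: nat assume "N \<ge> max 1 N1"
    then have N: "1 \<le> N" "N \<ge> N1" by auto
    have "prob (A N) \<le> inverse (real N ^ 2)"
      using probA[OF N(1)] bound_le[OF _ _ a0 N(1) N1 N(2)] \<delta>
      unfolding k_def t_def by force
    then show "norm (prob (A N)) \<le> inverse (real N ^ 2)" by simp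
  qed
  have "AE \<omega> in M. eventually (\<lambda>N. \<omega> \<in> space M - A N) sequentially"
    by (rule borel_cantelli_AE1) (use measA summ in \<open>auto simp: emeasure_eq_measure\<close>)
  then show "AE \<omega> in M. \<exists>N0. \<forall>N\<ge>N0. \<exists>\<rho> :: int list \<Rightarrow> nat.
       \<forall>x \<in> hcube N. 1 \<le> \<rho> x \<and> real (\<rho> x) \<le> real N powr (3 * \<delta>) \<and>
         (\<forall>y \<in> hsphere N x (\<rho> x).
            exp (\<beta> * sqrt (real N) * E N y \<omega>) \<le> 2 powr ((1/2) * real N powr (1 - \<delta>)))"
  proof (rule AE_mp[OF _ AE_I2], intro impI)
    fix \<omega> assume w: "\<omega> \<in> space M" and ev: "eventually (\<lambda>N. \<omega> \<in> space M - A N) sequentially"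
    then obtain N0 where N0: "\<And>N. N \<ge> N0 \<Longrightarrow> \<omega> \<notin> A N"
      by (auto simp: eventually_sequentially)
    show "\<exists>N0. \<forall>N\<ge>N0. \<exists>\<rho> :: int list \<Rightarrow> nat.
       \<forall>x \<in> hcube N. 1 \<le> \<rho> x \<and> real (\<rho> x) \<le> real N powr (3 * \<delta>) \<and>
         (\<forall>y \<in> hsphere N x (\<rho> x).
            exp (\<beta> * sqrt (real N) * E N y \<omega>) \<le> 2 powr ((1/2) * real N powr (1 - \<delta>)))"
    proof (intro exI allI impI)
      fix N assume "max 1 N0 \<le> N"
      then have N: "1 \<le> N" "N \<ge> N0" by auto
      define \<rho> where "\<rho> x = (SOME r. r \<in> {1..k N} \<and> (\<forall>y\<in>hsphere N x r. E N y \<omega> \<le> t N))" for x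
      show "\<forall>x \<in> hcube N. 1 \<le> \<rho> x \<and> real (\<rho> x) \<le> real N powr (3 * \<delta>) \<and>
         (\<forall>y \<in> hsphere N x (\<rho> x).
            exp (\<beta> * sqrt (real N) * E N y \<omega>) \<le> 2 powr ((1/2) * real N powr (1 - \<delta>)))"
      proof
        fix x assume x: "x \<in> hcube N"
        have "\<omega> \<notin> F N x" using N0[OF N(2)] x N(1) by (auto simp: A_def)
        then have "\<exists>r. r \<in> {1..k N} \<and> (\<forall>y\<in>hsphere N x r. E N y \<omega> \<le> t N)"
          using w by (auto simp: F_def not_less)
        then have r: "\<rho> x \<in> {1..k N} \<and> (\<forall>y\<in>hsphere N x (\<rho> x). E N y \<omega> \<le> t N)"
          unfolding \<rho>_def by (rule someI_ex)
        have "real (\<rho> x) \<le> real (k N)" using r by simp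
        also have "\<dots> \<le> real N powr (3 * \<delta>)" unfolding k_def by simp
        finally have "real (\<rho> x) \<le> real N powr (3 * \<delta>)" .
        moreover have "\<forall>y \<in> hsphere N x (\<rho> x).
            exp (\<beta> * sqrt (real N) * E N y \<omega>) \<le> 2 powr ((1/2) * real N powr (1 - \<delta>))"
          using r good_exp[OF assms(4) N(1)] unfolding t_def a_def by auto
        ultimately show "1 \<le> \<rho> x \<and> real (\<rho> x) \<le> real N powr (3 * \<delta>) \<and>
         (\<forall>y \<in> hsphere N x (\<rho> x).
            exp (\<beta> * sqrt (real N) * E N y \<omega>) \<le> 2 powr ((1/2) * real N powr (1 - \<delta>)))"
          using r by auto
      qed
    qed
  qed
qed
end
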